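(* Let $(X,d,\mu)$ be a space of homogeneous type, let $p(\cdot)\in\mathrm{LH}$ and let $w\in A_{p(\cdot)}$. Then there exists a constant $C_0$ depending on $p(\cdot)$, $w$ and $X$ such that for all balls $B$, \[ \|w\chi_B\|_{p(\cdot)}^{\,p_-(B)-p_+(B)}\le C_0. \]
   Context: A space of homogeneous type $(X,d,\mu)$: $X$ nonempty, $d$ a quasi-metric ($d(x,y)=0$ iff $x=y$, symmetric, $d(x,y)\le A_0(d(x,z)+d(z,y))$ for some $A_0\ge1$), $\mu$ a regular measure on the $\sigma$-algebra generated by balls $B(x,r)=\{y:d(x,y)<r\}$ and open sets, with $0<\mu(B(x,2r))\le C_\mu\mu(B(x,r))<\infty$. An exponent is a measurable $p:X\to[1,\infty]$; $p_-(E)=\operatorname{ess\,inf}_E p$, $p_+(E)=\operatorname{ess\,sup}_E p$. With $X_\infty=\{p=\infty\}$, $\rho_{p(\cdot)}(f)=\int_{X\setminus X_\infty}|f(x)|^{p(x)}d\mu+\|f\|_{L^\infty(X_\infty)}$ and $\|f\|_{p(\cdot)}=\inf\{\lambda>0:\rho_{p(\cdot)}(f/\lambda)\le1\}$; $p'(x)=p(x)/(p(x)-1)$ (with $1/0=\infty$, $1/\infty=0$). $p(\cdot)\in\mathrm{LH}_0$ if there is $C_0$ with $|p(x)-p(y)|<-C_0/\log d(x,y)$ whenever $d(x,y)<1/2$; $p(\cdot)\in\mathrm{LH}_\infty$ if there are constants $C_\infty,p_\infty$ with $|p(x)-p_\infty|<C_\infty/\log(e+d(x,x_0))$ for all $x$,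 for a fixed base point $x_0$ (choice irrelevant); $\mathrm{LH}=\mathrm{LH}_0\cap\mathrm{LH}_\infty$. A weight is a locally integrable $w:X\to[0,\infty]$ with $0<w<\infty$ a.e.; $w\in A_{p(\cdot)}$ means there is $K$ with $\|w\chi_B\|_{p(\cdot)}\|w^{-1}\chi_B\|_{p'(\cdot)}\le K\mu(B)$ for every ball $B$. *)

theory Defs
  imports "HOL-Analysis.Analysis"
begin

definition qball :: "('a \<Rightarrow> 'a \<Rightarrow> real) \<Rightarrow> 'a \<Rightarrow> real \<Rightarrow> 'a set" where
  "qball d x r = {y. d x y < r}"

definition qopen :: "('a \<Rightarrow> 'a \<Rightarrow> real) \<Rightarrow> 'a set \<Rightarrow> bool" where
  "qopen d U \<longleftrightarrow> (\<forall>x\<in>U. \<exists>r>0. qball d x r \<subseteq> U)"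

definition quasi_metric :: "('a \<Rightarrow> 'a \<Rightarrow> real) \<Rightarrow> bool" where
  "quasi_metric d \<longleftrightarrow>
     (\<forall>x y. 0 \<le> d x y) \<and> (\<forall>x y. d x y = 0 \<longleftrightarrow> x = y) \<and> (\<forall>x y. d x y = d y x) \<and>
     (\<exists>A0\<ge>1. \<forall>x y z. d x y \<le> A0 * (d x z + d z y))"

definition outer_regular :: "('a \<Rightarrow> 'a \<Rightarrow> real) \<Rightarrow> 'a measure \<Rightarrow> bool" where
  "outer_regular d M \<longleftrightarrow>
     (\<forall>E\<in>sets M. emeasure M E = (INF U\<in>{U. qopen d U \<and> E \<subseteq> U}. emeasure M U))"

definition homogeneous_type :: "('a \<Rightarrow> 'a \<Rightarrow> real) \<Rightarrow> 'a measure \<Rightarrow> bool" where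
  "homogeneous_type d M \<longleftrightarrow>
     quasi_metric d \<and> space M = UNIV \<and>
     sets M = sigma_sets UNIV ({qball d x r | x r. True} \<union> {U. qopen d U}) \<and>
     outer_regular d M \<and>
     (\<exists>C\<mu>::real. \<forall>x r. r > 0 \<longrightarrow>
        0 < emeasure M (qball d x (2 * r)) \<and>
        emeasure M (qball d x (2 * r)) \<le> ennreal C\<mu> * emeasure M (qball d x r) \<and>
        emeasure M (qball d x r) < \<infinity>)"

definition exponent :: "'a measure \<Rightarrow> ('a \<Rightarrow> ereal) \<Rightarrow> bool" where
  "exponent M p \<longleftrightarrow> p \<in> borel_measurable M \<and> (\<forall>x. 1 \<le> p x)"

definition p_minus :: "'a measure \<Rightarrow> ('a \<Rightarrow> ereal) \<Rightarrow> 'a set \<Rightarrow> ereal" where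
  "p_minus M p E = Sup {c. AE x in M. x \<in> E \<longrightarrow> c \<le> p x}"

definition p_plus :: "'a measure \<Rightarrow> ('a \<Rightarrow> ereal) \<Rightarrow> 'a set \<Rightarrow> ereal" where
  "p_plus M p E = Inf {c. AE x in M. x \<in> E \<longrightarrow> p x \<le> c}"

definition Linf_on :: "'a measure \<Rightarrow> 'a set \<Rightarrow> ('a \<Rightarrow> real) \<Rightarrow> ennreal" where
  "Linf_on M E f = Inf {c. AE x in M. x \<in> E \<longrightarrow> ennreal \<bar>f x\<bar> \<le> c}"

definition modular :: "'a measure \<Rightarrow> ('a \<Rightarrow> ereal) \<Rightarrow> ('a \<Rightarrow> real) \<Rightarrow> ennreal" where
  "modular M p f =
     (\<integral>\<^sup>+ x. (if p x = \<infinity> then 0 else ennreal (\<bar>f x\<bar> powr real_of_ereal (p x))) \<partial>M)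
     + Linf_on M {x. p x = \<infinity>} f"

text \<open>Luxemburg norm (value \<infinity> if no admissible \<lambda> exists).\<close>
definition vnorm :: "'a measure \<Rightarrow> ('a \<Rightarrow> ereal) \<Rightarrow> ('a \<Rightarrow> real) \<Rightarrow> ennreal" where
  "vnorm M p f = Inf (ennreal ` {t::real. 0 < t \<and> modular M p (\<lambda>x. f x / t) \<le> 1})"

definition conj_exp :: "('a \<Rightarrow> ereal) \<Rightarrow> 'a \<Rightarrow> ereal" where
  "conj_exp p x = (if p x = 1 then \<infinity> else if p x = \<infinity> then 1
                   else ereal (real_of_ereal (p x) / (real_of_ereal (p x) - 1)))"

definition LH0 :: "('a \<Rightarrow> 'a \<Rightarrow> real) \<Rightarrow> ('a \<Rightarrow> ereal) \<Rightarrow> bool" where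
  "LH0 d p \<longleftrightarrow> (\<exists>C0. \<forall>x y. 0 < d x y \<and> d x y < 1/2 \<longrightarrow>
      \<bar>p x - p y\<bar> < ereal (- C0 / ln (d x y)))"

definition LHinf :: "('a \<Rightarrow> 'a \<Rightarrow> real) \<Rightarrow> ('a \<Rightarrow> ereal) \<Rightarrow> bool" where
  "LHinf d p \<longleftrightarrow> (\<exists>x0. \<exists>Cinf pinf::real. \<forall>x.
      \<bar>p x - ereal pinf\<bar> < ereal (Cinf / ln (exp 1 + d x x0)))"

definition LH :: "('a \<Rightarrow> 'a \<Rightarrow> real) \<Rightarrow> ('a \<Rightarrow> ereal) \<Rightarrow> bool" where
  "LH d p \<longleftrightarrow> LH0 d p \<and> LHinf d p"

definition weight :: "('a \<Rightarrow> 'a \<Rightarrow> real) \<Rightarrow> 'a measure \<Rightarrow> ('a \<Rightarrow> real) \<Rightarrow> bool" where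
  "weight d M w \<longleftrightarrow> w \<in> borel_measurable M \<and> (\<forall>x. 0 \<le> w x) \<and> (AE x in M. 0 < w x) \<and>
     (\<forall>x r. (\<integral>\<^sup>+ y\<in>qball d x r. ennreal (w y) \<partial>M) < \<infinity>)"

definition Ap_var :: "('a \<Rightarrow> 'a \<Rightarrow> real) \<Rightarrow> 'a measure \<Rightarrow> ('a \<Rightarrow> ereal) \<Rightarrow> ('a \<Rightarrow> real) \<Rightarrow> bool" where
  "Ap_var d M p w \<longleftrightarrow> weight d M w \<and>
     (\<exists>K::real. \<forall>x r. 0 < r \<longrightarrow>
        vnorm M p (\<lambda>y. w y * indicator (qball d x r) y)
        * vnorm M (conj_exp p) (\<lambda>y. inverse (w y) * indicator (qball d x r) y)
        \<le> ennreal K * emeasure M (qball d x r))"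

end

theory Submission
  imports Defs
begin


lemma modular_mono:
  assumes p1: "\<And>x. 1 \<le> p x" and fg: "\<And>x. \<bar>f x\<bar> \<le> \<bar>g x\<bar>"
  shows "modular M p f \<le> modular M p g"
proof -
  have "(\<integral>\<^sup>+ x. (if p x = \<infinity> then 0 else ennreal (\<bar>f x\<bar> powr real_of_ereal (p x))) \<partial>M)
     \<le> (\<integral>\<^sup>+ x. (if p x = \<infinity> then 0 else ennreal (\<bar>g x\<bar> powr real_of_ereal (p x))) \<partial>M)"
  proof (rule nn_integral_mono)
    fix x
    have "0 \<le> real_of_ereal (p x)" using p1[of x]
      by (cases "p x") auto
    then show "(if p x = \<infinity> then 0 else ennreal (\<bar>f x\<bar> powr real_of_ereal (p x)))
       \<le> (if p x = \<infinity> then 0 else ennreal (\<bar>g x\<bar> powr real_of_ereal (p x)))"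
      using fg[of x] by (auto intro!: ennreal_leI powr_mono2)
  qed
  moreover have "Linf_on M {x. p x = \<infinity>} f \<le> Linf_on M {x. p x = \<infinity>} g"
    unfolding Linf_on_def
  proof (rule Inf_superset_mono, rule subsetI)
    fix c assume "c \<in> {c. AE x in M. x \<in> {x. p x = \<infinity>} \<longrightarrow> ennreal \<bar>g x\<bar> \<le> c}"
    then have "AE x in M. x \<in> {x. p x = \<infinity>} \<longrightarrow> ennreal \<bar>g x\<bar> \<le> c" by simp
    then have "AE x in M. x \<in> {x. p x = \<infinity>} \<longrightarrow> ennreal \<bar>f x\<bar> \<le> c"
      by eventually_elim (metis fg ennreal_leI order_trans)
    then show "c \<in> {c. AE x in M. x \<in> {x. p x = \<infinity>} \<longrightarrow> ennreal \<bar>f x\<bar> \<le> c}" by simp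
  qed
  ultimately show ?thesis unfolding modular_def by (rule add_mono)
qed

lemma vnorm_mono:
  assumes p1: "\<And>x. 1 \<le> p x" and fg: "\<And>x. \<bar>f x\<bar> \<le> \<bar>g x\<bar>"
  shows "vnorm M p f \<le> vnorm M p g"
  unfolding vnorm_def
proof (rule Inf_superset_mono, rule image_mono, safe)
  fix t :: real assume t: "0 < t" "modular M p (\<lambda>x. g x / t) \<le> 1"
  have "modular M p (\<lambda>x. f x / t) \<le> modular M p (\<lambda>x. g x / t)"
    using t(1) fg by (intro modular_mono[OF p1]) (simp add: divide_right_mono)
  with t(2) show "modular M p (\<lambda>x. f x / t) \<le> 1" by simp
qed

lemma vnorm_lt:
  assumes p1: "\<And>x. 1 \<le> p x" and lt: "vnorm M p f < ennreal a"
  shows "modular M p (\<lambda>x. f x / a) \<le> 1"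
proof -
  from lt obtain t where t: "0 < t" "modular M p (\<lambda>x. f x / t) \<le> 1" "ennreal t < ennreal a"
    unfolding vnorm_def by (auto simp: Inf_less_iff)
  then have "t < a" by (simp add: ennreal_less_iff)
  then have "modular M p (\<lambda>x. f x / a) \<le> modular M p (\<lambda>x. f x / t)"
    using t(1) by (intro modular_mono[OF p1]) (simp add: abs_divide divide_left_mono)
  with t show ?thesis by simp
qed



lemma Linf_on_empty: "Linf_on M {} f = 0"
  unfolding Linf_on_def by (simp add: bot_ennreal)

lemma Linf_on_AE:
  assumes "Linf_on M E f \<le> 1"
  shows "AE x in M. x \<in> E \<longrightarrow> \<bar>f x\<bar> \<le> 1"
proof -
  have "AE x in M. x \<in> E \<longrightarrow> ennreal \<bar>f x\<bar> \<le> 1 + ennreal (1 / Suc n)" for n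
  proof -
    have "Linf_on M E f < 1 + ennreal (1 / Suc n)"
      using assms by (rule le_less_trans) (simp add: ennreal_zero_less_divide)
    then obtain c where c: "AE x in M. x \<in> E \<longrightarrow> ennreal \<bar>f x\<bar> \<le> c" "c < 1 + ennreal (1 / Suc n)"
      unfolding Linf_on_def by (auto simp: Inf_less_iff)
    from c(1) show ?thesis by eventually_elim (use c(2) in auto)
  qed
  then have "AE x in M. \<forall>n. x \<in> E \<longrightarrow> ennreal \<bar>f x\<bar> \<le> 1 + ennreal (1 / Suc n)"
    by (subst AE_all_countable) blast
  then show ?thesis
  proof eventually_elim
    case (elim x)
    show ?case
    proof
      assume "x \<in> E"
      then have h: "\<bar>f x\<bar> \<le> 1 + 1 / Suc n" for n
      proof -
        have e: "1 + ennreal (1 / Suc n) = ennreal (1 + 1 / Suc n)"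
          by (subst ennreal_plus) auto
        have "ennreal \<bar>f x\<bar> \<le> ennreal (1 + 1 / Suc n)"
          using elim[rule_format, of n] \<open>x \<in> E\<close> e by simp
        then show ?thesis by (subst (asm) ennreal_le_iff) auto
      qed
      show "\<bar>f x\<bar> \<le> 1"
      proof (rule field_le_epsilon)
        fix e :: real assume "0 < e"
        then obtain n where "1 / Suc n < e"
          using nat_approx_posE by blast
        with h[of n] show "\<bar>f x\<bar> \<le> 1 + e" by simp
      qed
    qed
  qed
qed

lemma conj_exp_inf:
  assumes "p x \<noteq> \<infinity>" shows "conj_exp p x = \<infinity> \<longleftrightarrow> p x = 1"
  using assms unfolding conj_exp_def by auto

lemma holder_mod:
  assumes p1: "\<And>x. 1 \<le> p x" and pfin: "\<And>x. p x \<noteq> \<infinity>"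
    and Fm: "F \<in> borel_measurable M" and Gm: "G \<in> borel_measurable M"
    and pm: "p \<in> borel_measurable M"
    and mF: "modular M p F \<le> 1" and mG: "modular M (conj_exp p) G \<le> 1"
  shows "(\<integral>\<^sup>+x. ennreal \<bar>F x * G x\<bar> \<partial>M) \<le> 2"
proof -
  define q where "q x = real_of_ereal (p x)" for x
  have pq: "p x = ereal (q x)" for x
    using p1[of x] pfin[of x] unfolding q_def by (cases "p x") auto
  have q1: "1 \<le> q x" for x using p1[of x] unfolding pq by simp
  have qm: "q \<in> borel_measurable M" unfolding q_def using pm by measurable
  define A where "A x = ennreal (\<bar>F x\<bar> powr q x)" for x
  define h where "h x = (if q x = 1 then 0 else ennreal (\<bar>G x\<bar> powr (q x / (q x - 1))))" for x
  have Am: "A \<in> borel_measurable M" unfolding A_def using Fm qm by measurable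
  have hm: "h \<in> borel_measurable M" unfolding h_def using Gm qm by measurable
  have "modular M p F = (\<integral>\<^sup>+x. A x \<partial>M)"
    unfolding modular_def A_def using pfin by (simp add: q_def Linf_on_empty)
  with mF have IA: "(\<integral>\<^sup>+x. A x \<partial>M) \<le> 1" by simp
  have ce: "conj_exp p x = (if q x = 1 then \<infinity> else ereal (q x / (q x - 1)))" for x
    unfolding conj_exp_def pq by simp
  have "modular M (conj_exp p) G = (\<integral>\<^sup>+x. h x \<partial>M) + Linf_on M {x. conj_exp p x = \<infinity>} G"
  proof -
    have "(if conj_exp p x = \<infinity> then 0 else ennreal (\<bar>G x\<bar> powr real_of_ereal (conj_exp p x))) = h x" for x
      unfolding h_def ce by simp
    then show ?thesis unfolding modular_def by simp
  qed
  with mG have Ih: "(\<integral>\<^sup>+x. h x \<partial>M) \<le> 1" and IL: "Linf_on M {x. conj_exp p x = \<infinity>} G \<le> 1"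
    by (auto intro: order_trans[rotated])
  from Linf_on_AE[OF IL] have AEG: "AE x in M. q x = 1 \<longrightarrow> \<bar>G x\<bar> \<le> 1"
    by eventually_elim (simp add: ce)
  have "(\<integral>\<^sup>+x. ennreal \<bar>F x * G x\<bar> \<partial>M) \<le> (\<integral>\<^sup>+x. A x + h x \<partial>M)"
  proof (rule nn_integral_mono_AE)
    show "AE x in M. ennreal \<bar>F x * G x\<bar> \<le> A x + h x"
      using AEG
    proof eventually_elim
      case (elim x)
      show ?case
      proof (cases "q x = 1")
        case True
        then have "\<bar>F x * G x\<bar> \<le> \<bar>F x\<bar> powr q x"
          using elim by (simp add: abs_mult mult_left_le)
        then show ?thesis unfolding A_def h_def using True by (simp add: ennreal_leI)
      next
        case False
        with q1[of x] have q1': "1 < q x" by simp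
        define r where "r = q x / (q x - 1)"
        have r1: "1 < r" unfolding r_def using q1' by (simp add: field_simps)
        have "1 / q x + 1 / r = 1" unfolding r_def using q1' by (simp add: field_simps)
        from Youngs_inequality[OF q1' r1 this, of "\<bar>F x\<bar>" "\<bar>G x\<bar>"]
        have "\<bar>F x * G x\<bar> \<le> \<bar>F x\<bar> powr q x / q x + \<bar>G x\<bar> powr r / r"
          by (simp add: abs_mult)
        also have "\<dots> \<le> \<bar>F x\<bar> powr q x + \<bar>G x\<bar> powr r"
          using q1' r1 by (intro add_mono) (auto simp: divide_le_eq mult_le_cancel_left1 intro: mult_left_mono[of 1, simplified])
        finally show ?thesis unfolding A_def h_def r_def using False
          by (simp flip: ennreal_plus add: ennreal_leI)
      qed
    qed
  qed
  also have "\<dots> = (\<integral>\<^sup>+x. A x \<partial>M) + (\<integral>\<^sup>+x. h x \<partial>M)"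
    by (rule nn_integral_add[OF Am hm])
  also have "\<dots> \<le> 1 + 1" using IA Ih by (rule add_mono)
  finally show ?thesis by simp
qed



locale qm =
  fixes d :: "'a \<Rightarrow> 'a \<Rightarrow> real" and A :: real
  assumes A1: "1 \<le> A" and tri: "\<And>x y z. d x y \<le> A * (d x z + d z y)"
    and dsym: "\<And>x y. d x y = d y x" and dnn: "\<And>x y. 0 \<le> d x y"
    and d0: "\<And>x y. d x y = 0 \<Longrightarrow> x = y"
begin

lemma osc_small:
  fixes q :: "'a \<Rightarrow> real"
  assumes lh0: "\<And>y z. 0 < d y z \<Longrightarrow> d y z < 1/2 \<Longrightarrow> \<bar>q y - q z\<bar> < - C0 / ln (d y z)"
    and r: "0 < r" "r < 1 / (4 * A^2)"
    and y: "y \<in> qball d x r" and z: "z \<in> qball d x r"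
  shows "q y - q z \<le> max C0 0 / (- ln (2 * A * r))"
proof -
  have dyz: "d y z < 2 * A * r"
  proof -
    have "d y z \<le> A * (d y x + d x z)" by (rule tri)
    also have "\<dots> < A * (r + r)" using y z A1 by (intro mult_strict_left_mono) (auto simp: qball_def dsym)
    finally show ?thesis by simp
  qed
  have "2 * A * r < 1 / (2 * A)" using r A1 by (simp add: field_simps power2_eq_square)
  also have "\<dots> \<le> 1/2" using A1 by (simp add: field_simps)
  finally have hlt: "2 * A * r < 1/2" .
  have pos: "0 < - ln (2 * A * r)" using hlt r A1 by simp
  have nn: "0 \<le> max C0 0 / (- ln (2 * A * r))" using pos by (intro divide_nonneg_pos) auto
  show ?thesis
  proof (cases "d y z = 0")
    case True
    then have "y = z" by (rule d0)
    then show ?thesis using nn by simp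
  next
    case False
    then have dpos: "0 < d y z" using dnn[of y z] by simp
    have lnneg: "ln (d y z) < 0" using dpos dyz hlt by simp
    have "q y - q z \<le> \<bar>q y - q z\<bar>" by simp
    also have "\<dots> < - C0 / ln (d y z)" using lh0[OF dpos] dyz hlt by simp
    also have "\<dots> = C0 / (- ln (d y z))" by simp
    also have "\<dots> \<le> max C0 0 / (- ln (d y z))"
      using lnneg by (intro divide_right_mono) auto
    also have "\<dots> \<le> max C0 0 / (- ln (2 * A * r))"
    proof (rule divide_left_mono)
      show "- ln (2 * A * r) \<le> - ln (d y z)" using dpos dyz by simp
      show "0 < - ln (d y z) * - ln (2 * A * r)" using lnneg pos by (intro mult_pos_pos) auto
    qed simp
    finally show ?thesis by simp
  qed
qed

lemma far_pt:
  fixes q :: "'a \<Rightarrow> real"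
  assumes lhi: "\<And>y. \<bar>q y - pinf\<bar> < Cinf / ln (exp 1 + d y x0)"
    and r: "0 < r" and D: "4 * A \<le> d x x0" "2 * A * r < d x x0 + 1"
    and y: "y \<in> qball d x r"
  shows "\<bar>q y - pinf\<bar> \<le> max Cinf 0 / ln (exp 1 + d x x0 / (4 * A))"
proof -
  define D where "D = d x x0"
  have "D \<le> A * (d x y + d y x0)" unfolding D_def by (rule tri)
  also have "\<dots> < A * (r + d y x0)" using y A1 by (intro mult_strict_left_mono) (auto simp: qball_def)
  finally have "D / A < r + d y x0" using A1 by (simp add: field_simps)
  moreover have "r < (D + 1) / (2 * A)" using D A1 unfolding D_def by (simp add: field_simps)
  moreover have "D / (4 * A) \<le> D / A - (D + 1) / (2 * A)"
    using D A1 unfolding D_def by (simp add: field_simps)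
  ultimately have far: "D / (4 * A) \<le> d y x0" by linarith
  have D0: "0 \<le> D / (4 * A)" using D A1 unfolding D_def by simp
  have l1: "1 \<le> ln (exp 1 + D / (4 * A))"
  proof -
    have "0 < exp (1::real)" by simp
    then have p: "0 < exp 1 + D / (4 * A)" using D0 by linarith
    have "exp 1 \<le> exp 1 + D / (4 * A)" using D0 by simp
    then show ?thesis using p by (subst ln_ge_iff) auto
  qed
  have l2: "ln (exp 1 + D / (4 * A)) \<le> ln (exp 1 + d y x0)"
    using far D0 by (subst ln_le_cancel_iff) (auto intro: add_pos_nonneg)
  have "\<bar>q y - pinf\<bar> < Cinf / ln (exp 1 + d y x0)" by (rule lhi)
  also have "\<dots> \<le> max Cinf 0 / ln (exp 1 + d y x0)"
    using l1 l2 by (intro divide_right_mono) auto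
  also have "\<dots> \<le> max Cinf 0 / ln (exp 1 + D / (4 * A))"
    using l1 l2 by (intro divide_left_mono) (auto intro!: mult_pos_pos)
  finally show ?thesis unfolding D_def by simp
qed

lemma LHkey:
  fixes q :: "'a \<Rightarrow> real"
  assumes lh0: "\<And>y z. 0 < d y z \<Longrightarrow> d y z < 1/2 \<Longrightarrow> \<bar>q y - q z\<bar> < - C0 / ln (d y z)"
    and lhi: "\<And>y. \<bar>q y - pinf\<bar> < Cinf / ln (exp 1 + d y x0)"
    and P0: "0 \<le> P"
  shows "\<exists>G. \<forall>x r \<delta>. 0 < r \<longrightarrow> 0 \<le> \<delta> \<longrightarrow> \<delta> \<le> P \<longrightarrow>
     (\<forall>\<eta>. (\<forall>y\<in>qball d x r. \<forall>z\<in>qball d x r. q y - q z \<le> \<eta>) \<longrightarrow> \<delta> \<le> \<eta>) \<longrightarrow>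
     \<delta> * ln (1 + A * (d x x0 + 1) / r) \<le> G"
proof -
  define C0' where "C0' = max C0 0"
  define Ci where "Ci = max Cinf 0"
  have C0'0: "0 \<le> C0'" and Ci0: "0 \<le> Ci" unfolding C0'_def Ci_def by auto
  have lnA: "0 \<le> ln (4 * A)" "0 \<le> ln (4 * A^2)" "0 \<le> ln (1 + A)" "0 \<le> ln (4 * A + 1)"
    "0 \<le> ln (1 + 2 * A^2)"
  proof -
    have "1 \<le> A * A" using A1 by (metis mult_mono' mult_1 zero_le_one)
    then show "0 \<le> ln (4 * A^2)" by (simp add: power2_eq_square)
  qed (use A1 in \<open>auto simp: power2_eq_square\<close>)
  define G where "G = P * ln (1 + 2 * A^2) + P * ln (1 + A) + P * ln (4 * A^2) + 2 * C0'
     + P * ln (4 * A + 1) + 2 * Ci * (ln (4 * A) + 1)"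
  have Gs: "0 \<le> P * ln (1 + 2 * A^2)" "0 \<le> P * ln (1 + A)" "0 \<le> P * ln (4 * A^2)"
    "0 \<le> P * ln (4 * A + 1)" "0 \<le> 2 * Ci * (ln (4 * A) + 1)"
    using P0 lnA Ci0 by auto
  show ?thesis
  proof (intro exI allI impI)
    fix x :: 'a and r \<delta> :: real
    assume r: "0 < r" and d0: "0 \<le> \<delta>" and dP: "\<delta> \<le> P"
      and osc: "\<forall>\<eta>. (\<forall>y\<in>qball d x r. \<forall>z\<in>qball d x r. q y - q z \<le> \<eta>) \<longrightarrow> \<delta> \<le> \<eta>"
    define D where "D = d x x0"
    have D0: "0 \<le> D" unfolding D_def by (rule dnn)
    have arg1: "1 \<le> 1 + A * (D + 1) / r" using A1 D0 r by simp
    show "\<delta> * ln (1 + A * (d x x0 + 1) / r) \<le> G"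
    proof (cases "D + 1 \<le> 2 * A * r")
      case True
      have "1 + A * (D + 1) / r \<le> 1 + 2 * A^2"
      proof -
        have "A * (D + 1) \<le> A * (2 * A * r)" using True A1 by (intro mult_left_mono) auto
        then have "A * (D + 1) / r \<le> 2 * A^2" using r by (simp add: divide_le_eq power2_eq_square mult_ac)
        then show ?thesis by simp
      qed
      then have "ln (1 + A * (D + 1) / r) \<le> ln (1 + 2 * A^2)" using arg1 by simp
      then have "\<delta> * ln (1 + A * (D + 1) / r) \<le> P * ln (1 + 2 * A^2)"
        using d0 dP arg1 lnA by (intro mult_mono) auto
      then show ?thesis unfolding G_def D_def using Gs C0'0 by linarith
    next
      case False
      then have Dr: "2 * A * r < D + 1" by simp
      have "1 * r \<le> (2 * A) * r" using A1 r by (intro mult_right_mono) auto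
      then have rD: "r \<le> D + 1" using Dr by simp
      have "1 + A * (D + 1) / r \<le> (1 + A) * (D + 1) / r"
      proof -
        have "1 \<le> (D + 1) / r" using rD r by simp
        moreover have "(1 + A) * (D + 1) / r = (D + 1) / r + A * (D + 1) / r" by (simp add: add_divide_distrib distrib_right)
        ultimately show ?thesis by simp
      qed
      then have "ln (1 + A * (D + 1) / r) \<le> ln ((1 + A) * (D + 1) / r)" using arg1 by simp
      also have "\<dots> = ln (1 + A) + ln (D + 1) + (- ln r)"
        using A1 D0 r by (simp add: ln_div ln_mult)
      finally have Qle: "ln (1 + A * (D + 1) / r) \<le> ln (1 + A) + ln (D + 1) + (- ln r)" .
      have T1: "\<delta> * ln (1 + A) \<le> P * ln (1 + A)" using dP lnA by (intro mult_right_mono) auto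
      have T2: "\<delta> * (- ln r) \<le> P * ln (4 * A^2) + 2 * C0'"
      proof (cases "r < 1 / (4 * A^2)")
        case True
        have "\<forall>y\<in>qball d x r. \<forall>z\<in>qball d x r. q y - q z \<le> C0' / (- ln (2 * A * r))"
          unfolding C0'_def using osc_small[OF lh0 r True] by blast
        with osc have dle: "\<delta> \<le> C0' / (- ln (2 * A * r))" by blast
        have hlt: "2 * A * r < 1"
        proof -
          have "2 * A * r < 2 * A * (1 / (4 * A^2))" using True A1 by (intro mult_strict_left_mono) auto
          also have "\<dots> \<le> 1" using A1 by (simp add: field_simps power2_eq_square)
          finally show ?thesis .
        qed
        have pos: "0 < - ln (2 * A * r)" using hlt r A1 by simp
        have "ln r < ln (1 / (4 * A^2))" using True r by (subst ln_less_cancel_iff) auto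
        also have "\<dots> = - 2 * ln (2 * A)" using A1
        proof -
          have "ln (4::real) = ln (2 * 2)" by simp
          also have "\<dots> = 2 * ln 2" by (subst ln_mult) auto
          finally show ?thesis using A1 by (simp add: ln_div ln_mult power2_eq_square)
        qed
        finally have lr: "- ln r \<le> 2 * (- ln (2 * A * r))" using A1 r by (simp add: ln_mult)
        have "1 * r \<le> (2 * A) * r" using A1 r by (intro mult_right_mono) auto
        then have "r < 1" using hlt by simp
        then have "0 \<le> - ln r" using r by simp
        have "\<delta> * (- ln r) \<le> C0' / (- ln (2 * A * r)) * (- ln r)"
          using dle pos lr \<open>0 \<le> - ln r\<close> by (intro mult_right_mono) auto
        also have "\<dots> \<le> C0' / (- ln (2 * A * r)) * (2 * (- ln (2 * A * r)))"
          using lr C0'0 pos by (intro mult_left_mono) (auto simp: divide_nonneg_neg)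
        also have "\<dots> = 2 * C0'" using pos by simp
        finally show ?thesis using Gs by linarith
      next
        case False
        then have "1 / (4 * A^2) \<le> r" by simp
        then have "ln (1 / (4 * A^2)) \<le> ln r" using A1 r by (subst ln_le_cancel_iff) auto
        then have "- ln r \<le> ln (4 * A^2)" using A1 by (simp add: ln_div)
        show ?thesis
        proof (cases "- ln r \<le> 0")
          case True
          then have "\<delta> * (- ln r) \<le> 0" using d0 by (simp add: mult_nonneg_nonpos)
          then show ?thesis using Gs C0'0 by linarith
        next
          case False
          then have "\<delta> * (- ln r) \<le> P * ln (4 * A^2)"
            using d0 dP \<open>- ln r \<le> ln (4 * A^2)\<close> by (intro mult_mono) auto
          then show ?thesis using C0'0 by linarith
        qed
      qed
      have T3: "\<delta> * ln (D + 1) \<le> P * ln (4 * A + 1) + 2 * Ci * (ln (4 * A) + 1)"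
      proof (cases "D < 4 * A")
        case True
        have "ln (D + 1) \<le> ln (4 * A + 1)" using True D0 by simp
        moreover have "0 \<le> ln (D + 1)" using D0 by simp
        ultimately have "\<delta> * ln (D + 1) \<le> P * ln (4 * A + 1)" using d0 dP by (intro mult_mono) auto
        then show ?thesis using Gs by linarith
      next
        case False
        then have D4: "4 * A \<le> d x x0" unfolding D_def by simp
        define L where "L = ln (exp 1 + D / (4 * A))"
        have DA0: "0 \<le> D / (4 * A)" using D0 A1 by simp
        have L1: "1 \<le> L" unfolding L_def
        proof -
          have "0 < exp (1::real)" by simp
          then have p: "0 < exp 1 + D / (4 * A)" using DA0 by linarith
          have "exp 1 \<le> exp 1 + D / (4 * A)" using DA0 by simp
          then show "1 \<le> ln (exp 1 + D / (4 * A))" using p by (subst ln_ge_iff) auto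
        qed
        have pt: "\<bar>q y - pinf\<bar> \<le> Ci / L" if "y \<in> qball d x r" for y
          using far_pt[OF lhi r D4 _ that] Dr unfolding Ci_def L_def D_def by simp
        have "\<forall>y\<in>qball d x r. \<forall>z\<in>qball d x r. q y - q z \<le> 2 * Ci / L"
        proof (intro ballI)
          fix y z assume "y \<in> qball d x r" "z \<in> qball d x r"
          from pt[OF this(1)] pt[OF this(2)] show "q y - q z \<le> 2 * Ci / L" by linarith
        qed
        with osc have dle: "\<delta> \<le> 2 * Ci / L" by blast
        have "D + 1 \<le> 4 * A * (exp 1 + D / (4 * A))"
        proof -
          have "1 \<le> exp (1::real)" by simp
          then have "1 * 1 \<le> (4 * A) * exp 1" using A1 by (intro mult_mono) auto
          then have "1 \<le> 4 * A * exp 1" by simp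
          then show ?thesis using A1 by (simp add: field_simps)
        qed
        then have "ln (D + 1) \<le> ln (4 * A * (exp 1 + D / (4 * A)))" using D0 by simp
        also have "\<dots> = ln (4 * A) + L" unfolding L_def using A1 DA0
        proof -
          have "0 < exp (1::real)" by simp
          then have "0 < exp 1 + D / (4 * A)" using DA0 by linarith
          then show "ln (4 * A * (exp 1 + D / (4 * A))) = ln (4 * A) + ln (exp 1 + D / (4 * A))"
            using A1 by (subst ln_mult) auto
        qed
        finally have lD: "ln (D + 1) \<le> ln (4 * A) + L" .
        have lD0: "0 \<le> ln (D + 1)" using D0 by simp
        have "\<delta> * ln (D + 1) \<le> 2 * Ci / L * (ln (4 * A) + L)"
          using dle lD lD0 d0 by (intro mult_mono) auto
        also have "\<dots> = 2 * Ci * (ln (4 * A) / L + 1)" using L1 by (simp add: field_simps)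
        also have "\<dots> \<le> 2 * Ci * (ln (4 * A) + 1)"
        proof -
          have "ln (4 * A) / L \<le> ln (4 * A)" using L1 lnA by (simp add: divide_le_eq mult_le_cancel_left1)
          then show ?thesis using Ci0 by (intro mult_left_mono) auto
        qed
        finally show ?thesis using Gs by linarith
      qed
      have "\<delta> * ln (1 + A * (D + 1) / r) \<le> \<delta> * (ln (1 + A) + ln (D + 1) + (- ln r))"
        using Qle d0 by (intro mult_left_mono) auto
      also have "\<dots> = \<delta> * ln (1 + A) + \<delta> * ln (D + 1) + \<delta> * (- ln r)"
        by (simp add: algebra_simps)
      also have "\<dots> \<le> G" unfolding G_def using T1 T2 T3 Gs(1) by linarith
      finally show ?thesis unfolding D_def .
    qed
  qed
qed

end


lemma conj_exp_ge1: assumes "\<And>x. 1 \<le> p x" shows "1 \<le> conj_exp p x"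
proof -
  consider "p x = 1" | "p x = \<infinity>" | r where "p x = ereal r" "1 < r"
    using assms[of x] by (cases "p x") (fastforce simp: one_ereal_def)+
  then show ?thesis
  proof cases
    case 3
    then have "1 \<le> r / (r - 1)" by (simp add: field_simps)
    with 3 show ?thesis unfolding conj_exp_def by (simp add: one_ereal_def)
  qed (auto simp: conj_exp_def)
qed

lemma holder_norm:
  assumes p1: "\<And>x. 1 \<le> p x" and pfin: "\<And>x. p x \<noteq> \<infinity>"
    and fm: "f \<in> borel_measurable M" and gm: "g \<in> borel_measurable M"
    and pm: "p \<in> borel_measurable M"
    and a: "0 < a" and b: "0 < b"
    and na: "vnorm M p f < ennreal a" and nb: "vnorm M (conj_exp p) g < ennreal b"
  shows "(\<integral>\<^sup>+x. ennreal \<bar>f x * g x\<bar> \<partial>M) \<le> ennreal (2 * a * b)"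
proof -
  have mf: "modular M p (\<lambda>x. f x / a) \<le> 1" by (rule vnorm_lt[OF p1 na])
  have mg: "modular M (conj_exp p) (\<lambda>x. g x / b) \<le> 1"
    by (rule vnorm_lt[OF conj_exp_ge1[OF p1] nb])
  have "(\<integral>\<^sup>+x. ennreal \<bar>f x / a * (g x / b)\<bar> \<partial>M) \<le> 2"
    by (rule holder_mod[OF p1 pfin _ _ pm mf mg]) (use fm gm in \<open>auto\<close>)+
  moreover have "(\<integral>\<^sup>+x. ennreal \<bar>f x * g x\<bar> \<partial>M)
      = ennreal (a * b) * (\<integral>\<^sup>+x. ennreal \<bar>f x / a * (g x / b)\<bar> \<partial>M)"
  proof -
    have "(\<integral>\<^sup>+x. ennreal \<bar>f x * g x\<bar> \<partial>M) = (\<integral>\<^sup>+x. ennreal (a * b) * ennreal \<bar>f x / a * (g x / b)\<bar> \<partial>M)"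
      using a b by (intro nn_integral_cong) (simp add: abs_mult flip: ennreal_mult)
    also have "\<dots> = ennreal (a * b) * (\<integral>\<^sup>+x. ennreal \<bar>f x / a * (g x / b)\<bar> \<partial>M)"
      by (rule nn_integral_cmult) (use fm gm in \<open>auto\<close>)
    finally show ?thesis .
  qed
  ultimately have "(\<integral>\<^sup>+x. ennreal \<bar>f x * g x\<bar> \<partial>M) \<le> ennreal (a * b) * 2"
    by (simp add: mult_left_mono)
  also have "\<dots> = ennreal (2 * a * b)" using a b by (simp add: ennreal_mult mult_ac)
  finally show ?thesis .
qed



lemma vnorm_pos:
  fixes q :: "'a \<Rightarrow> real"
  assumes pq: "\<And>x. p x = ereal (q x)" and q1: "\<And>x. 1 \<le> q x"
    and qm: "q \<in> borel_measurable M" and wm: "w \<in> borel_measurable M" and w0: "\<And>x. 0 \<le> w x" and wpos: "AE x in M. 0 < w x"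
    and B: "B \<in> sets M" and mB: "0 < emeasure M B" "emeasure M B < \<infinity>"
  shows "vnorm M p (\<lambda>y. w y * indicator B y) \<noteq> 0"
proof
  assume v0: "vnorm M p (\<lambda>y. w y * indicator B y) = 0"
  define h where "h y = indicator B y * min (w y) 1" for y
  have hm: "h \<in> borel_measurable M" unfolding h_def using wm B by auto
  have h0: "\<And>y. 0 \<le> h y" unfolding h_def using w0 by (auto simp: indicator_def)
  define I where "I = (\<integral>\<^sup>+y. ennreal (h y) \<partial>M)"
  have "I \<le> (\<integral>\<^sup>+y. indicator B y \<partial>M)" unfolding I_def
    by (intro nn_integral_mono) (auto simp: h_def indicator_def)
  then have Ile: "I \<le> emeasure M B" using B by simp
  have "I \<noteq> 0"
  proof
    assume "I = 0"
    then have "AE y in M. ennreal (h y) = 0" unfolding I_def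
      by (subst (asm) nn_integral_0_iff_AE) (use hm in auto)
    then have "AE y in M. y \<notin> B" using wpos
      by eventually_elim (auto simp: h_def indicator_def)
    then have "emeasure M {y \<in> space M. y \<in> B} = 0" by (rule emeasure_eq_0_AE)
    moreover have "{y \<in> space M. y \<in> B} = B" using sets.sets_into_space[OF B] by auto
    ultimately show False using mB by simp
  qed
  obtain i where i: "I = ennreal i" "0 < i" using Ile mB \<open>I \<noteq> 0\<close>
    by (cases I) (auto simp: top_unique)
  obtain m where m: "emeasure M B = ennreal m" "0 \<le> m" using mB by (cases "emeasure M B") auto
  define t where "t = min 1 (i / (2 * (1 + m)))"
  have t: "0 < t" "t \<le> 1" unfolding t_def using i m by auto
  have "vnorm M p (\<lambda>y. w y * indicator B y) < ennreal t" using v0 t by simp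
  from vnorm_lt[OF _ this] have mod1: "modular M p (\<lambda>y. w y * indicator B y / t) \<le> 1"
    using pq q1 by simp
  have "modular M p (\<lambda>y. w y * indicator B y / t) =
      (\<integral>\<^sup>+y. ennreal (\<bar>w y * indicator B y / t\<bar> powr q y) \<partial>M)"
    unfolding modular_def pq by (simp add: Linf_on_empty)
  with mod1 have J: "(\<integral>\<^sup>+y. ennreal (\<bar>w y * indicator B y / t\<bar> powr q y) \<partial>M) \<le> 1" by simp
  have pt: "ennreal (h y / t) \<le> ennreal (\<bar>w y * indicator B y / t\<bar> powr q y) + indicator B y" for y
  proof (cases "y \<in> B")
    case False then show ?thesis by (simp add: h_def)
  next
    case True
    have hy: "h y = min (w y) 1" using True by (simp add: h_def)
    have real_le: "h y / t \<le> \<bar>w y * indicator B y / t\<bar> powr q y + 1"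
    proof (cases "1 \<le> w y / t")
      case True2: True
      have "h y / t \<le> w y / t" unfolding hy using t by (intro divide_right_mono) auto
      also have "\<dots> = (w y / t) powr 1" using True2 t w0[of y] by (simp add: abs_of_nonneg)
      also have "\<dots> \<le> (w y / t) powr q y" using True2 q1[of y] by (intro powr_mono) auto
      also have "\<dots> = \<bar>w y * indicator B y / t\<bar> powr q y" using True w0[of y] t by (simp add: abs_of_nonneg)
      finally show ?thesis by simp
    next
      case False2: False
      then have "w y / t < 1" by simp
      then have "w y < t" using t by (simp add: divide_less_eq)
      then have "h y / t \<le> 1" unfolding hy using t w0[of y] by (simp add: min_def divide_le_eq)
      moreover have "0 \<le> \<bar>w y * indicator B y / t\<bar> powr q y" by simp
      ultimately show ?thesis by linarith
    qed
    have "ennreal (h y / t) \<le> ennreal (\<bar>w y * indicator B y / t\<bar> powr q y + 1)"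
      by (rule ennreal_leI[OF real_le])
    also have "\<dots> = ennreal (\<bar>w y * indicator B y / t\<bar> powr q y) + indicator B y"
      using True by (simp add: ennreal_plus)
    finally show ?thesis .
  qed
  have "ennreal (1 / t) * I = (\<integral>\<^sup>+y. ennreal (1 / t) * ennreal (h y) \<partial>M)"
    unfolding I_def by (rule nn_integral_cmult[symmetric]) (use hm in auto)
  also have "\<dots> = (\<integral>\<^sup>+y. ennreal (h y / t) \<partial>M)"
    using t h0 by (intro nn_integral_cong) (simp flip: ennreal_mult)
  also have "\<dots> \<le> (\<integral>\<^sup>+y. ennreal (\<bar>w y * indicator B y / t\<bar> powr q y) + indicator B y \<partial>M)"
    by (intro nn_integral_mono pt)
  also have "\<dots> = (\<integral>\<^sup>+y. ennreal (\<bar>w y * indicator B y / t\<bar> powr q y) \<partial>M) + (\<integral>\<^sup>+y. indicator B y \<partial>M)"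
  proof (rule nn_integral_add)
    show "(\<lambda>y. ennreal (\<bar>w y * indicator B y / t\<bar> powr q y)) \<in> borel_measurable M"
      using wm B qm by auto
  qed (use B in auto)
  also have "\<dots> \<le> 1 + ennreal m" using J B m by (intro add_mono) auto
  finally have F: "ennreal (1 / t) * I \<le> 1 + ennreal m" .
  have "ennreal (1 / t) * I = ennreal (i / t)" using t i by (simp flip: ennreal_mult)
  moreover have "1 + ennreal m = ennreal (1 + m)" using m by (simp add: ennreal_plus)
  ultimately have "ennreal (i / t) \<le> ennreal (1 + m)" using F by simp
  then have "i / t \<le> 1 + m" using m by (subst (asm) ennreal_le_iff) auto
  moreover have "2 * (1 + m) \<le> i / t"
  proof -
    have "t \<le> i / (2 * (1 + m))" unfolding t_def by simp
    then show ?thesis using t m i by (simp add: field_simps)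
  qed
  ultimately show False using m by simp
qed



lemma pm_props:
  fixes q :: "'a \<Rightarrow> real"
  assumes pq: "\<And>x. p x = ereal (q x)" and q1: "\<And>x. 1 \<le> q x" and qP: "\<And>x. q x \<le> P"
    and E: "E \<in> sets M" and mE: "emeasure M E \<noteq> 0"
  shows "1 \<le> real_of_ereal (p_minus M p E)"
    and "real_of_ereal (p_minus M p E) \<le> real_of_ereal (p_plus M p E)"
    and "real_of_ereal (p_plus M p E) \<le> P"
    and "\<And>\<eta>. (\<forall>y\<in>E. \<forall>z\<in>E. q y - q z \<le> \<eta>) \<Longrightarrow>
           real_of_ereal (p_plus M p E) - real_of_ereal (p_minus M p E) \<le> \<eta>"
proof -
  define Lo where "Lo = {c. AE x in M. x \<in> E \<longrightarrow> c \<le> p x}"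
  define Up where "Up = {c. AE x in M. x \<in> E \<longrightarrow> p x \<le> c}"
  have pmi: "p_minus M p E = Sup Lo" unfolding p_minus_def Lo_def ..
  have ppl: "p_plus M p E = Inf Up" unfolding p_plus_def Up_def ..
  have oneLo: "1 \<in> Lo" unfolding Lo_def using q1 pq by simp
  have PUp: "ereal P \<in> Up" unfolding Up_def using qP pq by simp
  have sep: "c1 \<le> c2" if "c1 \<in> Lo" "c2 \<in> Up" for c1 c2
  proof (rule ccontr)
    assume "\<not> c1 \<le> c2"
    from that have "AE x in M. x \<in> E \<longrightarrow> c1 \<le> p x" "AE x in M. x \<in> E \<longrightarrow> p x \<le> c2"
      unfolding Lo_def Up_def by auto
    then have "AE x in M. \<not> (x \<in> E)"
    proof eventually_elim
      case (elim x) then show ?case using \<open>\<not> c1 \<le> c2\<close> by (auto dest: order_trans)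
    qed
    then have "emeasure M {x \<in> space M. x \<in> E} = 0" by (rule emeasure_eq_0_AE)
    moreover have "{x \<in> space M. x \<in> E} = E" using sets.sets_into_space[OF E] by auto
    ultimately show False using mE by simp
  qed
  have a1: "1 \<le> Sup Lo" using oneLo by (rule Sup_upper)
  have a2: "Sup Lo \<le> Inf Up" by (rule Sup_least, rule Inf_greatest) (rule sep)
  have a3: "Inf Up \<le> ereal P" using PUp by (rule Inf_lower)
  obtain a where a: "Sup Lo = ereal a" using a1 a2 a3 by (cases "Sup Lo") auto
  obtain b where b: "Inf Up = ereal b" using a1 a2 a3 by (cases "Inf Up") auto
  show "1 \<le> real_of_ereal (p_minus M p E)" using a1 a pmi by simp
  show "real_of_ereal (p_minus M p E) \<le> real_of_ereal (p_plus M p E)" using a2 a b pmi ppl by simp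
  show "real_of_ereal (p_plus M p E) \<le> P" using a3 b ppl by simp
  fix \<eta> assume osc: "\<forall>y\<in>E. \<forall>z\<in>E. q y - q z \<le> \<eta>"
  have bz: "b \<le> q z + \<eta>" if "z \<in> E" for z
  proof -
    have "ereal (q z + \<eta>) \<in> Up" unfolding Up_def using osc that pq
      by (auto intro!: AE_I2) (smt (verit))
    then have "Inf Up \<le> ereal (q z + \<eta>)" by (rule Inf_lower)
    then show ?thesis using b by simp
  qed
  have "ereal (b - \<eta>) \<in> Lo" unfolding Lo_def using bz pq by (auto intro!: AE_I2) (smt (verit))
  then have "ereal (b - \<eta>) \<le> Sup Lo" by (rule Sup_upper)
  then show "real_of_ereal (p_plus M p E) - real_of_ereal (p_minus M p E) \<le> \<eta>"
    using a b pmi ppl by simp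
qed



lemma qball_mono: "r \<le> R \<Longrightarrow> qball d x r \<subseteq> qball d x R"
  unfolding qball_def by auto

lemma doubling_iter:
  assumes dbl: "\<And>x r. 0 < r \<Longrightarrow> emeasure M (qball d x (2 * r)) \<le> ennreal C * emeasure M (qball d x r)"
    and C1: "1 \<le> C" and r: "0 < r"
  shows "emeasure M (qball d x (2^k * r)) \<le> ennreal (C^k) * emeasure M (qball d x r)"
proof (induction k)
  case 0 then show ?case by simp
next
  case (Suc k)
  have "emeasure M (qball d x (2^Suc k * r)) = emeasure M (qball d x (2 * (2^k * r)))" by (simp add: mult_ac)
  also have "\<dots> \<le> ennreal C * emeasure M (qball d x (2^k * r))" using r by (intro dbl) simp
  also have "\<dots> \<le> ennreal C * (ennreal (C^k) * emeasure M (qball d x r))"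
    using Suc by (intro mult_left_mono) auto
  also have "\<dots> = ennreal (C^Suc k) * emeasure M (qball d x r)"
    using C1 by (simp add: ennreal_mult mult_ac)
  finally show ?case .
qed

lemma doubling_ratio:
  assumes dbl: "\<And>x r. 0 < r \<Longrightarrow> emeasure M (qball d x (2 * r)) \<le> ennreal C * emeasure M (qball d x r)"
    and C1: "1 \<le> C"
    and fin: "\<And>x r. 0 < r \<Longrightarrow> 0 < emeasure M (qball d x r) \<and> emeasure M (qball d x r) < \<infinity>"
    and sets: "\<And>x r. qball d x r \<in> sets M"
    and r: "0 < r" and rR: "r \<le> R"
  shows "ln (measure M (qball d x R) / measure M (qball d x r)) \<le> ln C * (1 + log 2 (R / r))"
proof -
  define k where "k = nat \<lceil>log 2 (R / r)\<rceil>"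
  have Rr: "1 \<le> R / r" using r rR by simp
  have lg0: "0 \<le> log 2 (R / r)" using Rr by simp
  have "log 2 (R / r) \<le> real k" unfolding k_def by linarith
  then have "R / r \<le> 2 powr real k" using Rr by (subst (asm) log_le_iff) auto
  then have "R \<le> 2^k * r" using r by (simp add: powr_realpow divide_le_eq)
  have R0: "0 < R" using r rR by simp
  have "emeasure M (qball d x R) \<le> emeasure M (qball d x (2^k * r))"
    using \<open>R \<le> 2^k * r\<close> sets by (intro emeasure_mono qball_mono) auto
  also have "\<dots> \<le> ennreal (C^k) * emeasure M (qball d x r)" by (rule doubling_iter[OF dbl C1 r])
  finally have le: "emeasure M (qball d x R) \<le> ennreal (C^k) * emeasure M (qball d x r)" .
  have mR: "0 < measure M (qball d x R)" and mr: "0 < measure M (qball d x r)"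
    using fin[OF R0, of x] fin[OF r, of x]
    by (auto simp: measure_def enn2real_positive_iff less_top)
  have "measure M (qball d x R) \<le> C^k * measure M (qball d x r)"
  proof -
    have "ennreal (measure M (qball d x R)) \<le> ennreal (C^k * measure M (qball d x r))"
      using le fin[OF R0, of x] fin[OF r, of x] C1
      by (simp add: emeasure_eq_ennreal_measure less_top ennreal_mult)
    then show ?thesis using C1 mr by (subst (asm) ennreal_le_iff) auto
  qed
  then have "measure M (qball d x R) / measure M (qball d x r) \<le> C^k" using mr by (simp add: divide_le_eq)
  then have "ln (measure M (qball d x R) / measure M (qball d x r)) \<le> ln (C^k)"
    using mr mR C1 by (subst ln_le_cancel_iff) auto
  also have "\<dots> = real k * ln C" using C1 by (simp add: ln_realpow)
  also have "\<dots> \<le> (1 + log 2 (R / r)) * ln C"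
    using C1 lg0 by (intro mult_right_mono) (auto simp: k_def ceiling_le_iff intro: order_trans[OF of_int_ceiling_le_add_one])
  finally show ?thesis by (simp add: mult_ac)
qed



lemma chain:
  assumes p1: "\<And>x. 1 \<le> p x" and pfin: "\<And>x. p x \<noteq> \<infinity>" and pm: "p \<in> borel_measurable M"
    and wm: "w \<in> borel_measurable M" and w0: "\<And>x. 0 \<le> w x" and wpos: "AE x in M. 0 < w x"
    and B: "B \<in> sets M" and B': "B' \<in> sets M" and BB': "B \<subseteq> B'"
    and mB: "0 < emeasure M B" and mB': "emeasure M B' < \<infinity>"
    and eta: "0 < \<eta>" "ennreal \<eta> \<le> vnorm M p (\<lambda>y. w y * indicator B' y)"
    and K: "0 < K"
    and Ap: "vnorm M p (\<lambda>y. w y * indicator B' y) * vnorm M (conj_exp p) (\<lambda>y. inverse (w y) * indicator B' y)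
        \<le> ennreal K * emeasure M B'"
    and fin: "vnorm M p (\<lambda>y. w y * indicator B y) < \<infinity>"
  shows "\<eta> * measure M B / (4 * K * measure M B') \<le> enn2real (vnorm M p (\<lambda>y. w y * indicator B y))"
proof -
  define N' where "N' = vnorm M (conj_exp p) (\<lambda>y. inverse (w y) * indicator B' y)"
  have emB': "emeasure M B' = ennreal (measure M B')" using mB' by (simp add: emeasure_eq_ennreal_measure less_top)
  have emB: "emeasure M B = ennreal (measure M B)"
  proof (rule emeasure_eq_ennreal_measure)
    show "emeasure M B \<noteq> top" using mB' emeasure_mono[OF BB' B'] by (auto simp: top_unique)
  qed
  have mBpos: "0 < measure M B" using mB emB by simp
  have "measure M B \<le> measure M B'" using BB' B B' mB' by (intro measure_mono_fmeasurable) (auto simp: fmeasurable_def)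
  then have mB'pos: "0 < measure M B'" using mBpos by simp
  define \<beta> where "\<beta> = K * measure M B' / \<eta>"
  have \<beta>0: "0 < \<beta>" unfolding \<beta>_def using K mB'pos eta by simp
  have "ennreal \<eta> * N' \<le> vnorm M p (\<lambda>y. w y * indicator B' y) * N'"
    using eta by (intro mult_right_mono) auto
  also have "\<dots> \<le> ennreal (K * measure M B')" using Ap K unfolding N'_def emB' by (simp add: ennreal_mult)
  finally have etaN: "ennreal \<eta> * N' \<le> ennreal (K * measure M B')" .
  have N'le: "N' \<le> ennreal \<beta>"
  proof (cases N')
    case (real n)
    then have "ennreal (\<eta> * n) \<le> ennreal (K * measure M B')" using etaN eta by (simp add: ennreal_mult)
    then have "\<eta> * n \<le> K * measure M B'" using K mB'pos by (subst (asm) ennreal_le_iff) auto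
    then have "n \<le> \<beta>" unfolding \<beta>_def using eta by (simp add: field_simps)
    then show ?thesis using real by simp
  next
    case top
    then show ?thesis using etaN eta by (simp add: ennreal_mult_top top_unique)
  qed
  have NB: "vnorm M (conj_exp p) (\<lambda>y. inverse (w y) * indicator B y) \<le> N'"
    unfolding N'_def using BB' by (intro vnorm_mono conj_exp_ge1 p1) (auto simp: indicator_def)
  have NB2: "vnorm M (conj_exp p) (\<lambda>y. inverse (w y) * indicator B y) < ennreal (2 * \<beta>)"
  proof -
    have "ennreal \<beta> < ennreal (2 * \<beta>)" using \<beta>0 by (subst ennreal_less_iff) auto
    then show ?thesis using NB N'le by (meson le_less_trans order_trans)
  qed
  define N where "N = enn2real (vnorm M p (\<lambda>y. w y * indicator B y))"
  have Neq: "vnorm M p (\<lambda>y. w y * indicator B y) = ennreal N" unfolding N_def using fin by (simp add: less_top)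
  have N0: "0 \<le> N" unfolding N_def by simp
  have int_eq: "(\<integral>\<^sup>+x. ennreal \<bar>w x * indicator B x * (inverse (w x) * indicator B x)\<bar> \<partial>M) = emeasure M B"
  proof -
    have "(\<integral>\<^sup>+x. ennreal \<bar>w x * indicator B x * (inverse (w x) * indicator B x)\<bar> \<partial>M) = (\<integral>\<^sup>+x. indicator B x \<partial>M)"
      using wpos by (intro nn_integral_cong_AE) (auto elim!: eventually_mono simp: indicator_def)
    then show ?thesis using B by simp
  qed
  have "measure M B / (4 * \<beta>) \<le> N"
  proof (rule dense_ge)
    fix a assume a: "N < a"
    then have a0: "0 < a" using N0 by simp
    have "emeasure M B \<le> ennreal (2 * a * (2 * \<beta>))"
      unfolding int_eq[symmetric]
      by (rule holder_norm[OF p1 pfin _ _ pm a0 _ _ NB2]) (use wm B \<beta>0 a a0 Neq in \<open>auto intro: ennreal_lessI\<close>)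
    then have "measure M B \<le> 2 * a * (2 * \<beta>)" unfolding emB using a0 \<beta>0 by (subst (asm) ennreal_le_iff) auto
    then show "measure M B / (4 * \<beta>) \<le> a" using \<beta>0 by (simp add: field_simps)
  qed
  then show ?thesis unfolding \<beta>_def N_def using eta K mB'pos by (simp add: field_simps)
qed



theorem lemma3p3:
  fixes d :: "'a \<Rightarrow> 'a \<Rightarrow> real" and M :: "'a measure"
    and p :: "'a \<Rightarrow> ereal" and w :: "'a \<Rightarrow> real"
  assumes "homogeneous_type d M"
    and "exponent M p" and "LH d p"
    and "Ap_var d M p w"
  shows "\<exists>C0::real. \<forall>x r. 0 < r \<longrightarrow>
     enn2real (vnorm M p (\<lambda>y. w y * indicator (qball d x r) y))
       powr (real_of_ereal (p_minus M p (qball d x r)) - real_of_ereal (p_plus M p (qball d x r)))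
     \<le> C0"
proof -
  from assms(1) have qmet: "quasi_metric d"
    and setsM: "sets M = sigma_sets UNIV ({qball d x r | x r. True} \<union> {U. qopen d U})"
    and "\<exists>C\<mu>::real. \<forall>x r. r > 0 \<longrightarrow>
        0 < emeasure M (qball d x (2 * r)) \<and>
        emeasure M (qball d x (2 * r)) \<le> ennreal C\<mu> * emeasure M (qball d x r) \<and>
        emeasure M (qball d x r) < \<infinity>"
    unfolding homogeneous_type_def by auto
  then obtain C\<mu> :: real where C\<mu>: "\<And>x r. r > 0 \<Longrightarrow>
        0 < emeasure M (qball d x (2 * r)) \<and>
        emeasure M (qball d x (2 * r)) \<le> ennreal C\<mu> * emeasure M (qball d x r) \<and>
        emeasure M (qball d x r) < \<infinity>" by blast
  from qmet obtain A where A1: "1 \<le> A" and tri: "\<And>x y z. d x y \<le> A * (d x z + d z y)"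
    and dnn: "\<And>x y. 0 \<le> d x y" and d0: "\<And>x y. d x y = 0 \<longleftrightarrow> x = y" and dsym: "\<And>x y. d x y = d y x"
    unfolding quasi_metric_def by blast
  interpret qm d A using A1 tri dnn d0 dsym by unfold_locales auto
  have sets: "\<And>x r. qball d x r \<in> sets M" unfolding setsM by (rule sigma_sets.Basic) auto
  define C where "C = max C\<mu> 1"
  have C1: "1 \<le> C" unfolding C_def by simp
  have dbl: "emeasure M (qball d x (2 * r)) \<le> ennreal C * emeasure M (qball d x r)" if "0 < r" for x r
  proof -
    have "emeasure M (qball d x (2 * r)) \<le> ennreal C\<mu> * emeasure M (qball d x r)" using C\<mu>[OF that] by blast
    also have "\<dots> \<le> ennreal C * emeasure M (qball d x r)" unfolding C_def
      by (intro mult_right_mono ennreal_leI) auto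
    finally show ?thesis .
  qed
  have fin: "0 < emeasure M (qball d x r) \<and> emeasure M (qball d x r) < \<infinity>" if "0 < r" for x r
    using C\<mu>[of "r/2" x] C\<mu>[of r x] that by simp
  from assms(2) have pm: "p \<in> borel_measurable M" and p1: "\<And>x. 1 \<le> p x"
    unfolding exponent_def by auto
  from assms(3) obtain C0 where lh0e: "\<And>x y. 0 < d x y \<and> d x y < 1/2 \<Longrightarrow>
      \<bar>p x - p y\<bar> < ereal (- C0 / ln (d x y))"
    unfolding LH_def LH0_def by blast
  from assms(3) obtain x0 Cinf pinf where lhie: "\<And>x. \<bar>p x - ereal pinf\<bar> < ereal (Cinf / ln (exp 1 + d x x0))"
    unfolding LH_def LHinf_def by blast
  have pfin: "p x \<noteq> \<infinity>" for x
  proof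
    assume "p x = \<infinity>"
    then show False using lhie[of x] by simp
  qed
  define q where "q x = real_of_ereal (p x)" for x
  have pq: "p x = ereal (q x)" for x using p1[of x] pfin[of x] unfolding q_def by (cases "p x") auto
  have q1: "1 \<le> q x" for x using p1[of x] unfolding pq by simp
  have qm: "q \<in> borel_measurable M" unfolding q_def using pm by measurable
  have lh0: "\<bar>q y - q z\<bar> < - C0 / ln (d y z)" if "0 < d y z" "d y z < 1/2" for y z
    using lh0e[of y z] that unfolding pq by simp
  have lhi: "\<bar>q y - pinf\<bar> < Cinf / ln (exp 1 + d y x0)" for y
    using lhie[of y] unfolding pq by simp
  define P where "P = pinf + max Cinf 0"
  have qP: "q y \<le> P" for y
  proof -
    have "0 < exp (1::real)" by simp
    then have pp: "0 < exp 1 + d y x0" using dnn[of y x0] by linarith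
    have "exp 1 \<le> exp 1 + d y x0" using dnn[of y x0] by simp
    then have L1: "1 \<le> ln (exp 1 + d y x0)" using pp by (subst ln_ge_iff) auto
    have "Cinf / ln (exp 1 + d y x0) \<le> max Cinf 0"
    proof (cases "Cinf \<le> 0")
      case True then show ?thesis using L1 by (simp add: divide_nonpos_pos)
    next
      case False then show ?thesis using L1 by (simp add: divide_le_eq mult_le_cancel_left1)
    qed
    with lhi[of y] show ?thesis unfolding P_def by linarith
  qed
  have P1: "1 \<le> P" using q1[of x0] qP[of x0] by simp
  from assms(4) have wm: "w \<in> borel_measurable M" and w0: "\<And>x. 0 \<le> w x" and wpos: "AE x in M. 0 < w x"
    unfolding Ap_var_def weight_def by auto
  from assms(4) obtain K0 :: real where K0: "\<And>x r. 0 < r \<Longrightarrow>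
        vnorm M p (\<lambda>y. w y * indicator (qball d x r) y)
        * vnorm M (conj_exp p) (\<lambda>y. inverse (w y) * indicator (qball d x r) y)
        \<le> ennreal K0 * emeasure M (qball d x r)"
    unfolding Ap_var_def by blast
  define K where "K = max K0 1"
  have Kpos: "0 < K" unfolding K_def by simp
  have KAp: "vnorm M p (\<lambda>y. w y * indicator (qball d x r) y)
        * vnorm M (conj_exp p) (\<lambda>y. inverse (w y) * indicator (qball d x r) y)
        \<le> ennreal K * emeasure M (qball d x r)" if "0 < r" for x r
    using K0[OF that] unfolding K_def
    by (rule order_trans) (intro mult_right_mono ennreal_leI, auto)
  have P0: "0 \<le> P" using P1 by simp
  obtain G where G: "\<And>x r \<delta>. 0 < r \<Longrightarrow> 0 \<le> \<delta> \<Longrightarrow> \<delta> \<le> P \<Longrightarrow>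
     (\<forall>\<eta>. (\<forall>y\<in>qball d x r. \<forall>z\<in>qball d x r. q y - q z \<le> \<eta>) \<longrightarrow> \<delta> \<le> \<eta>) \<Longrightarrow>
     \<delta> * ln (1 + A * (d x x0 + 1) / r) \<le> G"
    using LHkey[OF lh0 lhi P0] by blast
  have N0ne: "vnorm M p (\<lambda>y. w y * indicator (qball d x0 1) y) \<noteq> 0"
    by (rule vnorm_pos[OF pq q1 qm wm w0 wpos sets]) (use fin[of 1 x0] in auto)
  obtain \<eta> where eta: "0 < \<eta>" "ennreal \<eta> \<le> vnorm M p (\<lambda>y. w y * indicator (qball d x0 1) y)"
  proof (cases "vnorm M p (\<lambda>y. w y * indicator (qball d x0 1) y)")
    case (real n)
    then show ?thesis using N0ne that[of n] by auto
  next
    case top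
    then show ?thesis using that[of 1] by auto
  qed
  define T where "T = P * \<bar>ln (4 * K / \<eta>)\<bar> + ln C * (P + G / ln 2)"
  show ?thesis
  proof (intro exI[of _ "max 1 (exp T)"] allI impI)
    fix x :: 'a and r :: real
    assume r: "0 < r"
    define B where "B = qball d x r"
    define D where "D = d x x0"
    define R' where "R' = A * (D + 1) + r"
    define B' where "B' = qball d x R'"
    have D0: "0 \<le> D" unfolding D_def by (rule dnn)
    have rR': "r \<le> R'" unfolding R'_def using A1 D0 by simp
    have R'0: "0 < R'" using r rR' by simp
    have BB': "B \<subseteq> B'" unfolding B_def B'_def by (rule qball_mono[OF rR'])
    have B0B': "qball d x0 1 \<subseteq> B'"
    proof
      fix y assume "y \<in> qball d x0 1"
      then have y: "d x0 y < 1" by (simp add: qball_def)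
      have "d x y \<le> A * (d x x0 + d x0 y)" by (rule tri)
      also have "\<dots> < A * (D + 1)" unfolding D_def using y A1 by (intro mult_strict_left_mono) auto
      also have "\<dots> \<le> R'" unfolding R'_def using r by simp
      finally show "y \<in> B'" unfolding B'_def qball_def by simp
    qed
    have etaB': "ennreal \<eta> \<le> vnorm M p (\<lambda>y. w y * indicator B' y)"
      using eta(2) by (rule order_trans) (intro vnorm_mono p1, use B0B' w0 in \<open>auto simp: indicator_def\<close>)
    have mBne: "emeasure M B \<noteq> 0" using fin[OF r, of x] unfolding B_def by (metis less_irrefl)
    note pp = pm_props[of p q P "qball d x r" M, OF pq q1 qP sets mBne[unfolded B_def]]
    define a where "a = real_of_ereal (p_minus M p B)"
    define b where "b = real_of_ereal (p_plus M p B)"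
    define \<delta> where "\<delta> = b - a"
    have ab: "a \<le> b" "1 \<le> a" "b \<le> P" using pp(1,2,3) unfolding a_def b_def B_def by auto
    have \<delta>0: "0 \<le> \<delta>" and \<delta>P: "\<delta> \<le> P" unfolding \<delta>_def using ab by auto
    have osc: "\<forall>\<eta>. (\<forall>y\<in>qball d x r. \<forall>z\<in>qball d x r. q y - q z \<le> \<eta>) \<longrightarrow> \<delta> \<le> \<eta>"
      using pp(4) unfolding \<delta>_def a_def b_def B_def by blast
    have Gb: "\<delta> * ln (1 + A * (D + 1) / r) \<le> G" unfolding D_def by (rule G[OF r \<delta>0 \<delta>P osc])
    define V where "V = vnorm M p (\<lambda>y. w y * indicator B y)"
    define N where "N = enn2real V"
    have N0: "0 \<le> N" unfolding N_def by simp
    have goal: "N powr (a - b) \<le> max 1 (exp T)"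
    proof (cases "V = \<infinity> \<or> 1 \<le> N")
      case True
      then have "N powr (a - b) \<le> 1"
      proof
        assume "V = \<infinity>" then show ?thesis unfolding N_def by simp
      next
        assume N1: "1 \<le> N"
        have "N powr (a - b) \<le> N powr 0" using N1 ab by (intro powr_mono) auto
        also have "\<dots> = 1" using N1 by simp
        finally show ?thesis .
      qed
      then show ?thesis by simp
    next
      case False
      then have Vfin: "V < \<infinity>" and N1: "N < 1" by (auto simp: less_top)
      define L where "L = \<eta> * measure M B / (4 * K * measure M B')"
      have emB': "emeasure M B' < \<infinity>" using fin[OF R'0, of x] unfolding B'_def by simp
      have LN: "L \<le> N" unfolding L_def N_def V_def
        by (rule chain[OF p1 pfin pm wm w0 wpos _ _ BB' _ emB' eta(1) etaB' Kpos])
          (use sets fin[OF r, of x] KAp[OF R'0, of x] Vfin in \<open>auto simp: B_def B'_def V_def\<close>)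
      have mB: "0 < measure M B" using fin[OF r, of x] unfolding B_def
        by (auto simp: measure_def enn2real_positive_iff less_top)
      have mB': "0 < measure M B'" using fin[OF R'0, of x] unfolding B'_def
        by (auto simp: measure_def enn2real_positive_iff less_top)
      have L0: "0 < L" unfolding L_def using eta(1) mB mB' Kpos by simp
      have Npos: "0 < N" using L0 LN by simp
      have "N powr (a - b) = exp ((a - b) * ln N)" using Npos by (simp add: powr_def)
      also have "\<dots> \<le> exp ((a - b) * ln L)"
      proof -
        have "ln L \<le> ln N" using L0 LN by simp
        then have "(a - b) * ln N \<le> (a - b) * ln L" using ab by (intro mult_left_mono_neg) auto
        then show ?thesis by simp
      qed
      also have "\<dots> \<le> exp T"
      proof -
        have lnL: "ln L = - ln (4 * K / \<eta>) - ln (measure M B' / measure M B)"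
        proof -
          have Leq: "L = (\<eta> / (4 * K)) * (measure M B / measure M B')" unfolding L_def by simp
          then have "ln L = ln (\<eta> / (4 * K)) + ln (measure M B / measure M B')"
          proof -
            have pos1: "0 < \<eta> / (4 * K)" using eta(1) Kpos by simp
            have pos2: "0 < measure M B / measure M B'" using mB mB' by simp
            show ?thesis using pos1 pos2 Leq eta(1) Kpos mB mB' by (simp add: ln_mult del: times_divide_eq_right times_divide_eq_left)
          qed
          also have "\<dots> = - ln (4 * K / \<eta>) - ln (measure M B' / measure M B)"
            using eta(1) Kpos mB mB' by (simp add: ln_div)
          finally show ?thesis .
        qed
        have "(a - b) * ln L = \<delta> * ln (4 * K / \<eta>) + \<delta> * ln (measure M B' / measure M B)"
          unfolding lnL \<delta>_def by (simp add: algebra_simps)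
        also have "\<dots> \<le> P * \<bar>ln (4 * K / \<eta>)\<bar> + ln C * (P + G / ln 2)"
        proof (rule add_mono)
          have "\<delta> * ln (4 * K / \<eta>) \<le> \<delta> * \<bar>ln (4 * K / \<eta>)\<bar>" using \<delta>0 by (intro mult_left_mono) auto
          also have "\<dots> \<le> P * \<bar>ln (4 * K / \<eta>)\<bar>" using \<delta>P by (intro mult_right_mono) auto
          finally show "\<delta> * ln (4 * K / \<eta>) \<le> P * \<bar>ln (4 * K / \<eta>)\<bar>" .
          have dr: "ln (measure M B' / measure M B) \<le> ln C * (1 + log 2 (R' / r))"
            unfolding B_def B'_def by (rule doubling_ratio[OF dbl C1 fin sets r rR'])
          have R'r: "R' / r = 1 + A * (D + 1) / r" unfolding R'_def using r by (simp add: field_simps)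
          have lnC: "0 \<le> ln C" using C1 by simp
          have "\<delta> * ln (measure M B' / measure M B) \<le> \<delta> * (ln C * (1 + log 2 (R' / r)))"
            using dr \<delta>0 by (intro mult_left_mono) auto
          also have "\<dots> = ln C * (\<delta> + \<delta> * ln (1 + A * (D + 1) / r) / ln 2)"
            unfolding R'r log_def by (simp add: algebra_simps)
          also have "\<dots> \<le> ln C * (P + G / ln 2)"
            using lnC \<delta>P Gb by (intro mult_left_mono add_mono divide_right_mono) auto
          finally show "\<delta> * ln (measure M B' / measure M B) \<le> ln C * (P + G / ln 2)" .
        qed
        finally show ?thesis unfolding T_def by simp
      qed
      finally show ?thesis by simp
    qed
    then show "enn2real (vnorm M p (\<lambda>y. w y * indicator (qball d x r) y))
       powr (real_of_ereal (p_minus M p (qball d x r)) - real_of_ereal (p_plus M p (qball d x r)))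
     \<le> max 1 (exp T)"
      unfolding N_def V_def a_def b_def B_def .
  qed
qed


end
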